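(* For every admissible policy $\pi$ and every $T\ge1$, $$\mathcal R(\pi,T)-\tilde{\mathcal R}(\pi,T)\le G_T(\pi)+G_T(\pi^*(T)),$$ $$\mathcal R(\pi,T)-\tilde{\mathcal R}(\pi,T)\ge-\bigl(G_T(\pi)+G_T(\pi_{p^*})+\tilde{\mathcal R}(\pi_{p^*},T)\bigr),$$ where $G_T(\pi)=\bigl|\mathbb E[\mathcal U(\hat F^\pi_T)-\mathcal U(\tilde F^\pi_T)]\bigr|$.
   Context: Bandit setting: $K\ge1$, $\mathbb K=\{1,\dots,K\}$; arm $i$ produces i.i.d. rewards $X^{(i)}_1,X^{(i)}_2,\dots$ with distribution function $F^{(i)}$, all rewards mutually independent. An admissible policy $\pi=(\pi_1,\pi_2,\dots)$ chooses $\pi_t\in\mathbb K$ as a measurable function of a randomization variable $V$ independent of rewards and of past actions/rewards; $\tau_i(t)=\sum_{s\le t}\mathbf 1\{\pi_s=i\}$, the reward at time $t$ is $X^\pi_t=X^{(i)}_{\tau_i(t)}$ on $\{\pi_t=i\}$; $\Pi$ is the set of admissible policies. $\hat F^\pi_T(y)=\frac1T\sum_{t\le T}\mathbf 1\{X^\pi_t\le y\}$. $\Delta_{K-1}$ is the probability simplex, $F_p=\sum_ip_iF^{(i)}$, $\mathcal D^\Delta=\{F_p:p\in\Delta_{K-1}\}$. $(L,\|\cdot\|)$ is a normed space of bounded functions on $\mathbb R$ containing these distribution functions and $\mathcal U:L\to\mathbb R$. Let $\pi^*(T)\in\arg\max_{\pi\in\Pi}\mathbb E[\mathcal U(\hat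 F^\pi_T)]$ (assumed to exist) and $\mathcal R(\pi,T)=\mathbb E[\mathcal U(\hat F^{\pi^*(T)}_T)-\mathcal U(\hat F^\pi_T)]$. Let $p^*\in\arg\max_{p\in\Delta_{K-1}}\mathcal U(F_p)$ (assumed to exist), $\tilde F^\pi_T=\frac1T\sum_i\tau_i(T)F^{(i)}$ and $\tilde{\mathcal R}(\pi,T)=\mathbb E[\mathcal U(F_{p^*})-\mathcal U(\tilde F^\pi_T)]$. $\pi_{p^*}$ denotes the simple policy whose actions $\pi_1,\pi_2,\dots$ are i.i.d., $\sigma(V)$-measurable, with $\mathbb P(\pi_t=i)=p^*_i$. All expectations are assumed finite. *)

theory Defs
  imports "HOL-Probability.Probability"
begin

text \<open>Arms are 1..K; time steps are t = 1,2,...; the reward sequence of arm i is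
  X i 1, X i 2, ...; V is the (real-valued) randomization variable.\<close>

definition tau :: "(nat \<Rightarrow> 'a \<Rightarrow> nat) \<Rightarrow> nat \<Rightarrow> nat \<Rightarrow> 'a \<Rightarrow> nat" where
  "tau A i t \<omega> = card {s \<in> {1..t}. A s \<omega> = i}"

definition reward_proc :: "(nat \<Rightarrow> nat \<Rightarrow> 'a \<Rightarrow> real) \<Rightarrow> (nat \<Rightarrow> 'a \<Rightarrow> nat) \<Rightarrow> nat \<Rightarrow> 'a \<Rightarrow> real" where
  "reward_proc X A t \<omega> = X (A t \<omega>) (tau A (A t \<omega>) t \<omega>) \<omega>"

text \<open>Generators of the information available at time t: V and the past actions and rewards.\<close>
definition hist_sets :: "'a measure \<Rightarrow> ('a \<Rightarrow> real) \<Rightarrow> (nat \<Rightarrow> nat \<Rightarrow> 'a \<Rightarrow> real)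
    \<Rightarrow> (nat \<Rightarrow> 'a \<Rightarrow> nat) \<Rightarrow> nat \<Rightarrow> 'a set set" where
  "hist_sets M V X A t =
     {V -` B \<inter> space M | B. B \<in> sets borel} \<union>
     (\<Union>s\<in>{1..<t}. {A s -` B \<inter> space M | B. True} \<union>
                   {reward_proc X A s -` B \<inter> space M | B. B \<in> sets borel})"

definition admissible :: "'a measure \<Rightarrow> ('a \<Rightarrow> real) \<Rightarrow> (nat \<Rightarrow> nat \<Rightarrow> 'a \<Rightarrow> real)
    \<Rightarrow> nat \<Rightarrow> (nat \<Rightarrow> 'a \<Rightarrow> nat) \<Rightarrow> bool" where
  "admissible M V X K A \<longleftrightarrow>
     (\<forall>t\<ge>1. (\<forall>\<omega>\<in>space M. A t \<omega> \<in> {1..K}) \<and>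
            A t \<in> measurable (sigma (space M) (hist_sets M V X A t)) (count_space UNIV))"

definition simple_policy :: "'a measure \<Rightarrow> ('a \<Rightarrow> real) \<Rightarrow> nat \<Rightarrow> (nat \<Rightarrow> real)
    \<Rightarrow> (nat \<Rightarrow> 'a \<Rightarrow> nat) \<Rightarrow> bool" where
  "simple_policy M V K p A \<longleftrightarrow>
     (\<forall>t\<ge>1. (\<forall>\<omega>\<in>space M. A t \<omega> \<in> {1..K}) \<and>
            A t \<in> measurable (vimage_algebra (space M) V borel) (count_space UNIV) \<and>
            (\<forall>i\<in>{1..K}. measure M {\<omega>\<in>space M. A t \<omega> = i} = p i)) \<and>
     prob_space.indep_vars M (\<lambda>_. count_space UNIV) A {1..}"

definition prob_simplex :: "nat \<Rightarrow> (nat \<Rightarrow> real) set" where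
  "prob_simplex K = {p. (\<forall>i\<in>{1..K}. 0 \<le> p i) \<and> (\<Sum>i=1..K. p i) = 1}"

definition mixture :: "nat \<Rightarrow> (nat \<Rightarrow> real \<Rightarrow> real) \<Rightarrow> (nat \<Rightarrow> real) \<Rightarrow> real \<Rightarrow> real" where
  "mixture K F p = (\<lambda>y. \<Sum>i=1..K. p i * F i y)"

definition emp_cdf :: "(nat \<Rightarrow> nat \<Rightarrow> 'a \<Rightarrow> real) \<Rightarrow> (nat \<Rightarrow> 'a \<Rightarrow> nat) \<Rightarrow> nat \<Rightarrow> 'a \<Rightarrow> real \<Rightarrow> real" where
  "emp_cdf X A T \<omega> = (\<lambda>y. real (card {t \<in> {1..T}. reward_proc X A t \<omega> \<le> y}) / real T)"

definition mix_cdf :: "nat \<Rightarrow> (nat \<Rightarrow> real \<Rightarrow> real) \<Rightarrow> (nat \<Rightarrow> 'a \<Rightarrow> nat) \<Rightarrow> nat \<Rightarrow> 'a \<Rightarrow> real \<Rightarrow> real" where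
  "mix_cdf K F A T \<omega> = (\<lambda>y. (\<Sum>i=1..K. real (tau A i T \<omega>) * F i y) / real T)"

definition regret where
  "regret M X U Astar A T =
     integral\<^sup>L M (\<lambda>\<omega>. U (emp_cdf X Astar T \<omega>) - U (emp_cdf X A T \<omega>))"

definition proxy_regret where
  "proxy_regret M K F U pstar A T =
     integral\<^sup>L M (\<lambda>\<omega>. U (mixture K F pstar) - U (mix_cdf K F A T \<omega>))"

definition gap where
  "gap M K X F U A T =
     \<bar>integral\<^sup>L M (\<lambda>\<omega>. U (emp_cdf X A T \<omega>) - U (mix_cdf K F A T \<omega>))\<bar>"

end

theory Submission
  imports Defs
begin


lemma simple_admissible:
  assumes "simple_policy M V K p A"
  shows "admissible M V X K A"
  unfolding admissible_def
proof (intro allI impI conjI)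
  fix t :: nat assume t: "t \<ge> 1"
  show "\<forall>\<omega>\<in>space M. A t \<omega> \<in> {1..K}" using assms t by (simp add: simple_policy_def)
  have m: "A t \<in> measurable (vimage_algebra (space M) V borel) (count_space UNIV)"
    using assms t by (simp add: simple_policy_def)
  have sub: "hist_sets M V X A t \<subseteq> Pow (space M)"
    unfolding hist_sets_def by auto
  have sub2: "{V -` B \<inter> space M | B. B \<in> sets borel} \<subseteq> hist_sets M V X A t"
    unfolding hist_sets_def by auto
  have "measurable (vimage_algebra (space M) V borel) (count_space UNIV)
        \<subseteq> measurable (sigma (space M) (hist_sets M V X A t)) (count_space UNIV)"
    unfolding vimage_algebra_def by (rule measurable_mono1[OF sub sub2])
  then show "A t \<in> measurable (sigma (space M) (hist_sets M V X A t)) (count_space UNIV)"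
    using m by blast
qed

lemma tau_sum:
  assumes "\<And>s. s \<in> {1..T} \<Longrightarrow> B s \<omega> \<in> {1..K}"
  shows "(\<Sum>i=1..K. real (tau B i T \<omega>)) = real T"
proof -
  have "(\<Sum>i=1..K. tau B i T \<omega>) = card (\<Union>i\<in>{1..K}. {s \<in> {1..T}. B s \<omega> = i})"
    unfolding tau_def by (rule card_UN_disjoint[symmetric]) auto
  also have "(\<Union>i\<in>{1..K}. {s \<in> {1..T}. B s \<omega> = i}) = {1..T}"
    using assms by auto
  finally have "(\<Sum>i=1..K. tau B i T \<omega>) = T" by simp
  then show ?thesis by (metis of_nat_sum)
qed

lemma mix_le:
  assumes B: "admissible M V X K B" and w: "\<omega> \<in> space M" and T: "T \<ge> 1"
    and pstar_max: "\<And>p. p \<in> prob_simplex K \<Longrightarrow> U (mixture K F p) \<le> U (mixture K F pstar)"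
  shows "U (mix_cdf K F B T \<omega>) \<le> U (mixture K F pstar)"
proof -
  define p where "p = (\<lambda>i. real (tau B i T \<omega>) / real T)"
  have "\<And>s. s \<in> {1..T} \<Longrightarrow> B s \<omega> \<in> {1..K}" using B w unfolding admissible_def by auto
  then have ts: "(\<Sum>i=1..K. real (tau B i T \<omega>)) = real T" by (rule tau_sum)
  have "p \<in> prob_simplex K"
    unfolding prob_simplex_def p_def using T ts by (simp add: sum_divide_distrib[symmetric])
  moreover have "mix_cdf K F B T \<omega> = mixture K F p"
    unfolding mix_cdf_def mixture_def p_def
    by (rule ext) (simp add: sum_divide_distrib)
  ultimately show ?thesis using pstar_max by simp
qed

theorem lemma16:
  fixes M :: "'a measure" and K :: nat and X :: "nat \<Rightarrow> nat \<Rightarrow> 'a \<Rightarrow> real"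
    and V :: "'a \<Rightarrow> real" and F :: "nat \<Rightarrow> real \<Rightarrow> real"
    and U :: "(real \<Rightarrow> real) \<Rightarrow> real" and pstar :: "nat \<Rightarrow> real"
    and A Astar Ap :: "nat \<Rightarrow> 'a \<Rightarrow> nat" and T :: nat
  assumes M: "prob_space M"
    and K: "K \<ge> 1"
    and indep: "prob_space.indep_vars M (\<lambda>_. borel)
                  (\<lambda>j. case j of None \<Rightarrow> V | Some (i, n) \<Rightarrow> X i n)
                  (insert None (Some ` ({1..K} \<times> {1..})))"
    and distr: "\<And>i n y. i \<in> {1..K} \<Longrightarrow> n \<ge> 1 \<Longrightarrow>
                  measure M {\<omega> \<in> space M. X i n \<omega> \<le> y} = F i y"
    and finite_exp: "\<And>B S. admissible M V X K B \<Longrightarrow> S \<ge> 1 \<Longrightarrow>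
                  integrable M (\<lambda>\<omega>. U (emp_cdf X B S \<omega>)) \<and>
                  integrable M (\<lambda>\<omega>. U (mix_cdf K F B S \<omega>))"
    and pstar: "pstar \<in> prob_simplex K"
    and pstar_max: "\<And>p. p \<in> prob_simplex K \<Longrightarrow> U (mixture K F p) \<le> U (mixture K F pstar)"
    and T: "T \<ge> 1"
    and Astar: "admissible M V X K Astar"
    and Astar_max: "\<And>B. admissible M V X K B \<Longrightarrow>
                  integral\<^sup>L M (\<lambda>\<omega>. U (emp_cdf X B T \<omega>))
                  \<le> integral\<^sup>L M (\<lambda>\<omega>. U (emp_cdf X Astar T \<omega>))"
    and Ap: "simple_policy M V K pstar Ap"
    and A: "admissible M V X K A"
  shows "regret M X U Astar A T - proxy_regret M K F U pstar A T
           \<le> gap M K X F U A T + gap M K X F U Astar T \<and>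
         regret M X U Astar A T - proxy_regret M K F U pstar A T
           \<ge> - (gap M K X F U A T + gap M K X F U Ap T + proxy_regret M K F U pstar Ap T)"
proof -
  interpret prob_space M by (rule M)
  have Ap_adm: "admissible M V X K Ap" by (rule simple_admissible[OF Ap])
  define c where "c = U (mixture K F pstar)"
  have iA: "integrable M (\<lambda>\<omega>. U (emp_cdf X A T \<omega>))" "integrable M (\<lambda>\<omega>. U (mix_cdf K F A T \<omega>))"
    using finite_exp[OF A T] by auto
  have iS: "integrable M (\<lambda>\<omega>. U (emp_cdf X Astar T \<omega>))" "integrable M (\<lambda>\<omega>. U (mix_cdf K F Astar T \<omega>))"
    using finite_exp[OF Astar T] by auto
  have iP: "integrable M (\<lambda>\<omega>. U (emp_cdf X Ap T \<omega>))" "integrable M (\<lambda>\<omega>. U (mix_cdf K F Ap T \<omega>))"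
    using finite_exp[OF Ap_adm T] by auto
  define EA where "EA = integral\<^sup>L M (\<lambda>\<omega>. U (emp_cdf X A T \<omega>))"
  define MA where "MA = integral\<^sup>L M (\<lambda>\<omega>. U (mix_cdf K F A T \<omega>))"
  define ES where "ES = integral\<^sup>L M (\<lambda>\<omega>. U (emp_cdf X Astar T \<omega>))"
  define MS where "MS = integral\<^sup>L M (\<lambda>\<omega>. U (mix_cdf K F Astar T \<omega>))"
  define EP where "EP = integral\<^sup>L M (\<lambda>\<omega>. U (emp_cdf X Ap T \<omega>))"
  define MP where "MP = integral\<^sup>L M (\<lambda>\<omega>. U (mix_cdf K F Ap T \<omega>))"
  have reg: "regret M X U Astar A T = ES - EA"
    unfolding regret_def ES_def EA_def using iA iS by (simp add: Bochner_Integration.integral_diff)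
  have prA: "proxy_regret M K F U pstar A T = c - MA"
    unfolding proxy_regret_def c_def MA_def using iA by (simp add: Bochner_Integration.integral_diff prob_space)
  have prP: "proxy_regret M K F U pstar Ap T = c - MP"
    unfolding proxy_regret_def c_def MP_def using iP by (simp add: Bochner_Integration.integral_diff prob_space)
  have gA: "gap M K X F U A T = \<bar>EA - MA\<bar>"
    unfolding gap_def EA_def MA_def using iA by (simp add: Bochner_Integration.integral_diff)
  have gS: "gap M K X F U Astar T = \<bar>ES - MS\<bar>"
    unfolding gap_def ES_def MS_def using iS by (simp add: Bochner_Integration.integral_diff)
  have gP: "gap M K X F U Ap T = \<bar>EP - MP\<bar>"
    unfolding gap_def EP_def MP_def using iP by (simp add: Bochner_Integration.integral_diff)
  have ml: "U (mix_cdf K F Astar T \<omega>) \<le> c" if "\<omega> \<in> space M" for \<omega>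
    unfolding c_def using mix_le[of M V X K Astar \<omega> T U F pstar] Astar that T pstar_max by blast
  have "MS \<le> integral\<^sup>L M (\<lambda>\<omega>. c)"
    unfolding MS_def
    by (rule integral_mono[OF iS(2)]) (use ml in auto)
  then have MSc: "MS \<le> c" by (simp add: prob_space)
  have EPS: "EP \<le> ES" unfolding EP_def ES_def by (rule Astar_max[OF Ap_adm])
  show ?thesis unfolding reg prA prP gA gS gP using MSc EPS by linarith
qed

end
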